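(* Let $\{\mathcal H,\gamma,\ell,\ell^{(2)}\}$ be metric hypersurface data and $\theta$ any one-form on $\mathcal H$. Then $$n^b\mathring\nabla_a\theta_b=\mathring\nabla_a\big(\theta(n)\big)-\theta(n)s_a-P^{bc}U_{ac}\theta_b+n^{(2)}\big(\theta(n)\mathring\nabla_a\ell^{(2)}+P^{bc}F_{ac}\theta_b\big),$$ $$n^b\mathring\nabla_b\theta_a=(\mathcal L_n\theta)_a-\theta(n)s_a-P^{bc}U_{ac}\theta_b+n^{(2)}\big(\theta(n)\mathring\nabla_a\ell^{(2)}+P^{bc}F_{ac}\theta_b\big),$$ $$2n^b\mathring\nabla_{(a}\theta_{b)}=(\mathcal L_n\theta)_a+\mathring\nabla_a\big(\theta(n)\big)-2\big(\theta(n)s_a+P^{bc}U_{ac}\theta_b\big)+2n^{(2)}\big(\theta(n)\mathring\nabla_a\ell^{(2)}+P^{bc}F_{ac}\theta_b\big),$$ $$n^an^b\mathring\nabla_a\theta_b=\mathcal L_n\big(\theta(n)\big)+n^{(2)}\theta(n)n(\ell^{(2)})+P^{bc}\theta_b\Big(2n^{(2)}s_c-\tfrac12(n^{(2)})^2\mathring\nabla_c\ell^{(2)}-\tfrac12\mathring\nabla_cn^{(2)}\Big).$$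
   Context: Metric hypersurface data: $\mathcal H$ smooth $\mathfrak n$-manifold with symmetric $(0,2)$-tensor $\gamma$, one-form $\ell$, function $\ell^{(2)}$ such that $\mathcal A((W,a),(V,b))=\gamma(W,V)+a\ell(V)+b\ell(W)+ab\ell^{(2)}$ is non-degenerate on each $T_p\mathcal H\times\mathbb R$. $P$ (symmetric $(2,0)$), $n$, $n^{(2)}$ defined by $\gamma_{ab}n^b+n^{(2)}\ell_a=0$, $\ell_an^a+n^{(2)}\ell^{(2)}=1$, $P^{ab}\ell_b+\ell^{(2)}n^a=0$, $P^{ac}\gamma_{cb}+\ell_bn^a=\delta^a_b$. $U_{ab}=\frac12(\mathcal L_n\gamma)_{ab}+\ell_{(a}\partial_{b)}n^{(2)}$, $F_{ab}=\partial_{[a}\ell_{b]}$ ($F=\frac12d\ell$), $s_a=n^bF_{ba}$, $\theta(n)=\theta_an^a$; brackets: weight-$\frac12$ (anti)symmetrization. $\mathring\nabla$ is the torsion-free connection on $\mathcal H$ with $\mathring\nabla_a\gamma_{bc}=-\ell_cU_{ab}-\ell_bU_{ac}$ and $\mathring\nabla_a\ell_b=F_{ab}-\ell^{(2)}U_{ab}$. *)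

theory Defs
  imports "HOL-Analysis.Analysis"
begin

text \<open>The hypersurface H is represented by a coordinate
  domain: an open set U of real^'n (dimension = CARD('n)). Tensor fields are given by
  their component functions in these coordinates.\<close>

definition pd :: "'n::finite \<Rightarrow> (real^'n \<Rightarrow> real) \<Rightarrow> real^'n \<Rightarrow> real" where
  "pd i f x = deriv (\<lambda>t. f (x + t *\<^sub>R axis i 1)) 0"

fun Ck :: "nat \<Rightarrow> (real^'n::finite) set \<Rightarrow> (real^'n \<Rightarrow> real) \<Rightarrow> bool" where
  "Ck 0 U f = continuous_on U f"
| "Ck (Suc k) U f = (continuous_on U f \<and>
     (\<forall>i. \<forall>x\<in>U. (\<lambda>t. f (x + t *\<^sub>R axis i 1)) differentiable (at 0)) \<and>
     (\<forall>i. Ck k U (pd i f)))"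

definition smooth_fun :: "(real^'n::finite) set \<Rightarrow> (real^'n \<Rightarrow> real) \<Rightarrow> bool" where
  "smooth_fun U f = (\<forall>k. Ck k U f)"

definition smooth_1 :: "(real^'n::finite) set \<Rightarrow> (real^'n \<Rightarrow> 'n \<Rightarrow> real) \<Rightarrow> bool" where
  "smooth_1 U T = (\<forall>a. smooth_fun U (\<lambda>x. T x a))"

definition smooth_2 :: "(real^'n::finite) set \<Rightarrow> (real^'n \<Rightarrow> 'n \<Rightarrow> 'n \<Rightarrow> real) \<Rightarrow> bool" where
  "smooth_2 U T = (\<forall>a b. smooth_fun U (\<lambda>x. T x a b))"

definition Aform :: "(real^'n::finite \<Rightarrow> 'n \<Rightarrow> 'n \<Rightarrow> real) \<Rightarrow> (real^'n \<Rightarrow> 'n \<Rightarrow> real) \<Rightarrow> (real^'n \<Rightarrow> real)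
    \<Rightarrow> real^'n \<Rightarrow> ((real^'n) \<times> real) \<Rightarrow> ((real^'n) \<times> real) \<Rightarrow> real" where
  "Aform gam ell ell2 p WA VB =
     (let W = fst WA; a = snd WA; V = fst VB; b = snd VB in
      (\<Sum>i\<in>UNIV. \<Sum>j\<in>UNIV. gam p i j * W$i * V$j) + a * (\<Sum>j\<in>UNIV. ell p j * V$j)
      + b * (\<Sum>i\<in>UNIV. ell p i * W$i) + a * b * ell2 p)"

definition metric_hypersurface_data ::
  "(real^'n::finite) set \<Rightarrow> (real^'n \<Rightarrow> 'n \<Rightarrow> 'n \<Rightarrow> real) \<Rightarrow> (real^'n \<Rightarrow> 'n \<Rightarrow> real) \<Rightarrow> (real^'n \<Rightarrow> real) \<Rightarrow> bool" where
  "metric_hypersurface_data U gam ell ell2 \<longleftrightarrow>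
     open U \<and> smooth_2 U gam \<and> smooth_1 U ell \<and> smooth_fun U ell2 \<and>
     (\<forall>p\<in>U. \<forall>a b. gam p a b = gam p b a) \<and>
     (\<forall>p\<in>U. \<forall>WA. (\<forall>VB. Aform gam ell ell2 p WA VB = 0) \<longrightarrow> WA = (0, 0))"

definition hsd_inverse ::
  "(real^'n::finite) set \<Rightarrow> (real^'n \<Rightarrow> 'n \<Rightarrow> 'n \<Rightarrow> real) \<Rightarrow> (real^'n \<Rightarrow> 'n \<Rightarrow> real) \<Rightarrow> (real^'n \<Rightarrow> real)
    \<Rightarrow> (real^'n \<Rightarrow> 'n \<Rightarrow> 'n \<Rightarrow> real) \<Rightarrow> (real^'n \<Rightarrow> 'n \<Rightarrow> real) \<Rightarrow> (real^'n \<Rightarrow> real) \<Rightarrow> bool" where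
  "hsd_inverse U gam ell ell2 P n n2 \<longleftrightarrow>
     smooth_2 U P \<and> smooth_1 U n \<and> smooth_fun U n2 \<and>
     (\<forall>p\<in>U.
       (\<forall>a b. P p a b = P p b a) \<and>
       (\<forall>a. (\<Sum>b\<in>UNIV. gam p a b * n p b) + n2 p * ell p a = 0) \<and>
       (\<Sum>a\<in>UNIV. ell p a * n p a) + n2 p * ell2 p = 1 \<and>
       (\<forall>a. (\<Sum>b\<in>UNIV. P p a b * ell p b) + ell2 p * n p a = 0) \<and>
       (\<forall>a b. (\<Sum>c\<in>UNIV. P p a c * gam p c b) + ell p b * n p a = (if a = b then 1 else 0)))"

definition lie_gam :: "(real^'n::finite \<Rightarrow> 'n \<Rightarrow> real) \<Rightarrow> (real^'n \<Rightarrow> 'n \<Rightarrow> 'n \<Rightarrow> real) \<Rightarrow> real^'n \<Rightarrow> 'n \<Rightarrow> 'n \<Rightarrow> real" where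
  "lie_gam n gam x a b = (\<Sum>c\<in>UNIV. n x c * pd c (\<lambda>y. gam y a b) x
      + gam x c b * pd a (\<lambda>y. n y c) x + gam x a c * pd b (\<lambda>y. n y c) x)"

definition Uten :: "(real^'n::finite \<Rightarrow> 'n \<Rightarrow> 'n \<Rightarrow> real) \<Rightarrow> (real^'n \<Rightarrow> 'n \<Rightarrow> real) \<Rightarrow> (real^'n \<Rightarrow> 'n \<Rightarrow> real)
    \<Rightarrow> (real^'n \<Rightarrow> real) \<Rightarrow> real^'n \<Rightarrow> 'n \<Rightarrow> 'n \<Rightarrow> real" where
  "Uten gam ell n n2 x a b = lie_gam n gam x a b / 2
      + (ell x a * pd b n2 x + ell x b * pd a n2 x) / 2"

definition Ften :: "(real^'n::finite \<Rightarrow> 'n \<Rightarrow> real) \<Rightarrow> real^'n \<Rightarrow> 'n \<Rightarrow> 'n \<Rightarrow> real" where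
  "Ften ell x a b = (pd a (\<lambda>y. ell y b) x - pd b (\<lambda>y. ell y a) x) / 2"

definition sform :: "(real^'n::finite \<Rightarrow> 'n \<Rightarrow> real) \<Rightarrow> (real^'n \<Rightarrow> 'n \<Rightarrow> real) \<Rightarrow> real^'n \<Rightarrow> 'n \<Rightarrow> real" where
  "sform ell n x a = (\<Sum>b\<in>UNIV. n x b * Ften ell x b a)"

text \<open>Covariant derivative of a one-form for Christoffel symbols Gam x c a b = Gamma^c_{ab}.\<close>
definition cov1 :: "(real^'n::finite \<Rightarrow> 'n \<Rightarrow> 'n \<Rightarrow> 'n \<Rightarrow> real) \<Rightarrow> (real^'n \<Rightarrow> 'n \<Rightarrow> real) \<Rightarrow> real^'n \<Rightarrow> 'n \<Rightarrow> 'n \<Rightarrow> real" where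
  "cov1 Gam th x a b = pd a (\<lambda>y. th y b) x - (\<Sum>c\<in>UNIV. Gam x c a b * th x c)"

definition cov2 :: "(real^'n::finite \<Rightarrow> 'n \<Rightarrow> 'n \<Rightarrow> 'n \<Rightarrow> real) \<Rightarrow> (real^'n \<Rightarrow> 'n \<Rightarrow> 'n \<Rightarrow> real) \<Rightarrow> real^'n \<Rightarrow> 'n \<Rightarrow> 'n \<Rightarrow> 'n \<Rightarrow> real" where
  "cov2 Gam T x a b c = pd a (\<lambda>y. T y b c) x
      - (\<Sum>d\<in>UNIV. Gam x d a b * T x d c) - (\<Sum>d\<in>UNIV. Gam x d a c * T x b d)"

definition ring_connection ::
  "(real^'n::finite) set \<Rightarrow> (real^'n \<Rightarrow> 'n \<Rightarrow> 'n \<Rightarrow> real) \<Rightarrow> (real^'n \<Rightarrow> 'n \<Rightarrow> real) \<Rightarrow> (real^'n \<Rightarrow> real)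
    \<Rightarrow> (real^'n \<Rightarrow> 'n \<Rightarrow> real) \<Rightarrow> (real^'n \<Rightarrow> real) \<Rightarrow> (real^'n \<Rightarrow> 'n \<Rightarrow> 'n \<Rightarrow> 'n \<Rightarrow> real) \<Rightarrow> bool" where
  "ring_connection U gam ell ell2 n n2 Gam \<longleftrightarrow>
     (\<forall>x\<in>U.
       (\<forall>c a b. Gam x c a b = Gam x c b a) \<and>
       (\<forall>a b c. cov2 Gam gam x a b c
          = - ell x c * Uten gam ell n n2 x a b - ell x b * Uten gam ell n n2 x a c) \<and>
       (\<forall>a b. cov1 Gam ell x a b = Ften ell x a b - ell2 x * Uten gam ell n n2 x a b))"

definition thn :: "(real^'n::finite \<Rightarrow> 'n \<Rightarrow> real) \<Rightarrow> (real^'n \<Rightarrow> 'n \<Rightarrow> real) \<Rightarrow> real^'n \<Rightarrow> real" where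
  "thn th n x = (\<Sum>b\<in>UNIV. th x b * n x b)"

definition lie1 :: "(real^'n::finite \<Rightarrow> 'n \<Rightarrow> real) \<Rightarrow> (real^'n \<Rightarrow> 'n \<Rightarrow> real) \<Rightarrow> real^'n \<Rightarrow> 'n \<Rightarrow> real" where
  "lie1 n th x a = (\<Sum>b\<in>UNIV. n x b * pd b (\<lambda>y. th y a) x + th x b * pd a (\<lambda>y. n y b) x)"

definition lie0 :: "(real^'n::finite \<Rightarrow> 'n \<Rightarrow> real) \<Rightarrow> (real^'n \<Rightarrow> real) \<Rightarrow> real^'n \<Rightarrow> real" where
  "lie0 n f x = (\<Sum>b\<in>UNIV. n x b * pd b f x)"

end

theory Submission
  imports Defs
begin


lemma pd_has:
  assumes "smooth_fun U f" "x \<in> U"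
  shows "((\<lambda>t. f (x + t *\<^sub>R axis i 1)) has_real_derivative pd i f x) (at 0)"
proof -
  have "Ck (Suc 0) U f" using assms(1) unfolding smooth_fun_def by blast
  then have "(\<lambda>t. f (x + t *\<^sub>R axis i 1)) differentiable (at 0)" using assms(2) by simp
  then show ?thesis unfolding pd_def by (simp add: DERIV_deriv_iff_real_differentiable)
qed

lemma pd_eqI:
  assumes "((\<lambda>t. f (x + t *\<^sub>R axis i 1)) has_real_derivative D) (at 0)"
  shows "pd i f x = D"
  using assms unfolding pd_def by (rule DERIV_imp_deriv)

lemma pd_local_zero:
  fixes U :: "(real^'n::finite) set" and f :: "real^'n \<Rightarrow> real"
  assumes "open U" "x \<in> U" "\<And>y. y \<in> U \<Longrightarrow> f y = 0"
    and "((\<lambda>t. f (x + t *\<^sub>R axis i 1)) has_real_derivative D) (at 0)"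
  shows "D = 0"
proof -
  obtain e where e: "e > 0" "ball x e \<subseteq> U" using assms(1,2) open_contains_ball by blast
  have ev: "eventually (\<lambda>t. f (x + t *\<^sub>R axis i 1) = (\<lambda>t. 0::real) t) (nhds (0::real))"
    unfolding eventually_nhds_metric
  proof (intro exI[of _ e] conjI allI impI)
    fix t :: real assume "dist t 0 < e"
    then have "x + t *\<^sub>R axis i 1 \<in> ball x e" by (simp add: dist_norm)
    then show "f (x + t *\<^sub>R axis i 1) = (\<lambda>t. 0) t" using e assms(3) by auto
  qed (use e in auto)
  have "((\<lambda>t. 0::real) has_real_derivative D) (at 0)"
    using DERIV_cong_ev[OF refl ev refl] assms(4) by simp
  then show ?thesis using DERIV_const DERIV_unique by blast
qed

lemma line_prod:
  assumes "smooth_fun U f" "smooth_fun U g" "x \<in> U"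
  shows "((\<lambda>t. f (x + t *\<^sub>R axis i 1) * g (x + t *\<^sub>R axis i 1)) has_real_derivative (pd i f x * g x + f x * pd i g x)) (at 0)"
proof -
  have "((\<lambda>t. f (x + t *\<^sub>R axis i 1) * g (x + t *\<^sub>R axis i 1)) has_real_derivative
     (pd i f x * g (x + 0 *\<^sub>R axis i 1) + pd i g x * f (x + 0 *\<^sub>R axis i 1))) (at 0)"
    by (rule DERIV_mult[OF pd_has[OF assms(1,3)] pd_has[OF assms(2,3)]])
  then show ?thesis by (simp add: mult.commute)
qed



lemma sum_swap_mult:
  fixes A :: "'a::finite \<Rightarrow> 'b::finite \<Rightarrow> real"
  shows "(\<Sum>e\<in>UNIV. (\<Sum>f\<in>UNIV. A f e) * c e) = (\<Sum>f\<in>UNIV. \<Sum>e\<in>UNIV. A f e * c e)"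
  by (simp add: sum_distrib_right) (rule sum.swap)

lemma alg_N:
  fixes g PP UU FF :: "'n::finite \<Rightarrow> 'n \<Rightarrow> real" and l nn :: "'n \<Rightarrow> real"
  fixes dg G :: "'n \<Rightarrow> 'n \<Rightarrow> 'n \<Rightarrow> real" and dl dn :: "'n \<Rightarrow> 'n \<Rightarrow> real"
    and dnn dll ss :: "'n \<Rightarrow> real" and ll mm :: real
  assumes H1: "\<And>a. (\<Sum>b\<in>UNIV. g a b * nn b) + mm * l a = 0"
    and H2: "(\<Sum>a\<in>UNIV. l a * nn a) + mm * ll = 1"
    and H3: "\<And>a. (\<Sum>b\<in>UNIV. PP a b * l b) + ll * nn a = 0"
    and H4: "\<And>a b. (\<Sum>c\<in>UNIV. PP a c * g c b) + l b * nn a = (if a = b then 1 else 0)"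
    and D1: "\<And>c a. (\<Sum>b\<in>UNIV. dg c a b * nn b + g a b * dn c b) + dnn c * l a + mm * dl c a = 0"
    and D2: "\<And>c. (\<Sum>a\<in>UNIV. dl c a * nn a + l a * dn c a) + dnn c * ll + mm * dll c = 0"
    and C1: "\<And>a b c. dg a b c - (\<Sum>d\<in>UNIV. G d a b * g d c) - (\<Sum>d\<in>UNIV. G d a c * g b d) = - l c * UU a b - l b * UU a c"
    and C2: "\<And>a b. dl a b - (\<Sum>c\<in>UNIV. G c a b * l c) = FF a b - ll * UU a b"
    and FFa: "\<And>a b. FF a b = - FF b a"
    and ss: "\<And>a. ss a = (\<Sum>b\<in>UNIV. nn b * FF b a)"
  shows "dn a b + (\<Sum>d\<in>UNIV. G b a d * nn d) = (\<Sum>d\<in>UNIV. PP b d * UU a d) - mm * (\<Sum>d\<in>UNIV. PP b d * FF a d) + nn b * ss a - mm * nn b * dll a"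
proof -
  define N where "N e = dn a e + (\<Sum>f\<in>UNIV. G e a f * nn f)" for e
  define Unn where "Unn = (\<Sum>e\<in>UNIV. UU a e * nn e)"
  have gN: "(\<Sum>e\<in>UNIV. g d e * N e) = UU a d + l d * (Unn - dnn a) - mm * FF a d" for d
  proof -
    have e1: "(\<Sum>e\<in>UNIV. g d e * dn a e) = -(\<Sum>e\<in>UNIV. dg a d e * nn e) - dnn a * l d - mm * dl a d"
      using D1[of a d] by (simp add: sum.distrib)
    have "(\<Sum>e\<in>UNIV. dg a d e * nn e) = (\<Sum>e\<in>UNIV. ((\<Sum>f\<in>UNIV. G f a d * g f e) + (\<Sum>f\<in>UNIV. G f a e * g d f) - l e * UU a d - l d * UU a e) * nn e)"
    proof (rule sum.cong[OF refl])
      fix e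
      have "dg a d e = (\<Sum>f\<in>UNIV. G f a d * g f e) + (\<Sum>f\<in>UNIV. G f a e * g d f) - l e * UU a d - l d * UU a e"
        using C1[of a d e] by linarith
      then show "dg a d e * nn e = ((\<Sum>f\<in>UNIV. G f a d * g f e) + (\<Sum>f\<in>UNIV. G f a e * g d f) - l e * UU a d - l d * UU a e) * nn e" by simp
    qed
    also have "\<dots> = (\<Sum>e\<in>UNIV. (\<Sum>f\<in>UNIV. G f a d * g f e) * nn e) + (\<Sum>e\<in>UNIV. (\<Sum>f\<in>UNIV. G f a e * g d f) * nn e) - (\<Sum>e\<in>UNIV. l e * nn e) * UU a d - l d * Unn"
      by (simp add: algebra_simps sum.distrib sum_subtractf sum_distrib_left sum_distrib_right Unn_def)
    finally have e2: "(\<Sum>e\<in>UNIV. dg a d e * nn e) = (\<Sum>e\<in>UNIV. (\<Sum>f\<in>UNIV. G f a d * g f e) * nn e) + (\<Sum>e\<in>UNIV. (\<Sum>f\<in>UNIV. G f a e * g d f) * nn e) - (\<Sum>e\<in>UNIV. l e * nn e) * UU a d - l d * Unn" .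
    have "(\<Sum>e\<in>UNIV. (\<Sum>f\<in>UNIV. G f a d * g f e) * nn e) = (\<Sum>f\<in>UNIV. G f a d * (\<Sum>e\<in>UNIV. g f e * nn e))"
      by (simp add: sum_swap_mult sum_distrib_left mult.assoc)
    also have "\<dots> = (\<Sum>f\<in>UNIV. G f a d * (- mm * l f))"
      using H1 by (metis add.commute add_eq_0_iff mult_minus_left)
    finally have e3: "(\<Sum>e\<in>UNIV. (\<Sum>f\<in>UNIV. G f a d * g f e) * nn e) = - mm * (\<Sum>f\<in>UNIV. G f a d * l f)"
      by (simp add: sum_distrib_left algebra_simps)
    have e4: "(\<Sum>e\<in>UNIV. (\<Sum>f\<in>UNIV. G f a e * g d f) * nn e) = (\<Sum>e\<in>UNIV. g d e * (\<Sum>f\<in>UNIV. G e a f * nn f))"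
      by (simp add: sum_distrib_right sum_distrib_left algebra_simps) (rule sum.swap)
    have e5: "dl a d = (\<Sum>f\<in>UNIV. G f a d * l f) + FF a d - ll * UU a d" using C2[of a d] by simp
    have e6: "(\<Sum>e\<in>UNIV. l e * nn e) = 1 - mm * ll" using H2 by simp
    have "(\<Sum>e\<in>UNIV. g d e * N e) = (\<Sum>e\<in>UNIV. g d e * dn a e) + (\<Sum>e\<in>UNIV. g d e * (\<Sum>f\<in>UNIV. G e a f * nn f))"
      by (simp add: N_def algebra_simps sum.distrib)
    then show ?thesis using e1 e2 e3 e4 e5 e6 by (simp add: algebra_simps)
  qed
  have lN: "(\<Sum>e\<in>UNIV. l e * N e) = ss a + ll * Unn - ll * dnn a - mm * dll a"
  proof -
    have e1: "(\<Sum>e\<in>UNIV. l e * dn a e) = -(\<Sum>e\<in>UNIV. dl a e * nn e) - dnn a * ll - mm * dll a"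
      using D2[of a] by (simp add: sum.distrib)
    have "(\<Sum>e\<in>UNIV. dl a e * nn e) = (\<Sum>e\<in>UNIV. ((\<Sum>f\<in>UNIV. G f a e * l f) + FF a e - ll * UU a e) * nn e)"
    proof (rule sum.cong[OF refl])
      fix e
      have "dl a e = (\<Sum>f\<in>UNIV. G f a e * l f) + FF a e - ll * UU a e"
        using C2[of a e] by linarith
      then show "dl a e * nn e = ((\<Sum>f\<in>UNIV. G f a e * l f) + FF a e - ll * UU a e) * nn e" by simp
    qed
    also have "\<dots> = (\<Sum>e\<in>UNIV. (\<Sum>f\<in>UNIV. G f a e * l f) * nn e) + (\<Sum>e\<in>UNIV. FF a e * nn e) - ll * Unn"
      by (simp add: algebra_simps sum.distrib sum_subtractf sum_distrib_left sum_distrib_right Unn_def)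
    finally have e2: "(\<Sum>e\<in>UNIV. dl a e * nn e) = (\<Sum>e\<in>UNIV. (\<Sum>f\<in>UNIV. G f a e * l f) * nn e) + (\<Sum>e\<in>UNIV. FF a e * nn e) - ll * Unn" .
    have e3: "(\<Sum>e\<in>UNIV. FF a e * nn e) = - ss a" unfolding ss
      by (simp add: FFa[of a] sum_negf[symmetric] mult.commute)
    have e4: "(\<Sum>e\<in>UNIV. (\<Sum>f\<in>UNIV. G f a e * l f) * nn e) = (\<Sum>e\<in>UNIV. l e * (\<Sum>f\<in>UNIV. G e a f * nn f))"
      by (simp add: sum_distrib_right sum_distrib_left algebra_simps) (rule sum.swap)
    have "(\<Sum>e\<in>UNIV. l e * N e) = (\<Sum>e\<in>UNIV. l e * dn a e) + (\<Sum>e\<in>UNIV. l e * (\<Sum>f\<in>UNIV. G e a f * nn f))"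
      by (simp add: N_def algebra_simps sum.distrib)
    then show ?thesis using e1 e2 e3 e4 by (simp add: algebra_simps)
  qed
  have "(\<Sum>e\<in>UNIV. (if b = e then 1 else 0) * N e) = (\<Sum>e\<in>UNIV. if b = e then N e else 0)"
    by (rule sum.cong) auto
  then have "N b = (\<Sum>e\<in>UNIV. (if b = e then 1 else 0) * N e)" by simp
  also have "\<dots> = (\<Sum>e\<in>UNIV. ((\<Sum>d\<in>UNIV. PP b d * g d e) + l e * nn b) * N e)" using H4 by simp
  also have "\<dots> = (\<Sum>d\<in>UNIV. PP b d * (\<Sum>e\<in>UNIV. g d e * N e)) + nn b * (\<Sum>e\<in>UNIV. l e * N e)"
    by (simp add: algebra_simps sum.distrib sum_distrib_left sum_distrib_right) (rule sum.swap)
  also have "\<dots> = (\<Sum>d\<in>UNIV. PP b d * UU a d) + (\<Sum>d\<in>UNIV. PP b d * l d) * (Unn - dnn a) - mm * (\<Sum>d\<in>UNIV. PP b d * FF a d)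
       + nn b * (ss a + ll * Unn - ll * dnn a - mm * dll a)"
  proof -
    have "(\<Sum>d\<in>UNIV. PP b d * (\<Sum>e\<in>UNIV. g d e * N e)) = (\<Sum>d\<in>UNIV. PP b d * (UU a d + l d * (Unn - dnn a) - mm * FF a d))"
      by (simp only: gN)
    also have "\<dots> = (\<Sum>d\<in>UNIV. PP b d * UU a d) + (\<Sum>d\<in>UNIV. PP b d * l d) * (Unn - dnn a) - mm * (\<Sum>d\<in>UNIV. PP b d * FF a d)"
      by (simp add: ring_distribs sum.distrib sum_subtractf sum_distrib_left sum_distrib_right mult.assoc mult.left_commute)
    finally show ?thesis by (simp only: lN)
  qed
  also have "\<dots> = (\<Sum>d\<in>UNIV. PP b d * UU a d) - mm * (\<Sum>d\<in>UNIV. PP b d * FF a d) + nn b * ss a - mm * nn b * dll a"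
  proof -
    have h: "(\<Sum>d\<in>UNIV. PP b d * l d) = - ll * nn b" using H3[of b] by linarith
    show ?thesis unfolding h by (simp add: algebra_simps)
  qed
  finally show ?thesis by (simp add: N_def)
qed

lemma alg_Un:
  fixes g UU FF :: "'n::finite \<Rightarrow> 'n \<Rightarrow> real" and l nn :: "'n \<Rightarrow> real"
  fixes dg :: "'n \<Rightarrow> 'n \<Rightarrow> 'n \<Rightarrow> real" and dl dn :: "'n \<Rightarrow> 'n \<Rightarrow> real"
    and dnn dll ss :: "'n \<Rightarrow> real" and ll mm :: real
  assumes H1: "\<And>a. (\<Sum>b\<in>UNIV. g a b * nn b) + mm * l a = 0"
    and H2: "(\<Sum>a\<in>UNIV. l a * nn a) + mm * ll = 1"
    and D1: "\<And>c a. (\<Sum>b\<in>UNIV. dg c a b * nn b + g a b * dn c b) + dnn c * l a + mm * dl c a = 0"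
    and D2: "\<And>c. (\<Sum>a\<in>UNIV. dl c a * nn a + l a * dn c a) + dnn c * ll + mm * dll c = 0"
    and UUdef: "\<And>a b. UU a b = (\<Sum>c\<in>UNIV. nn c * dg c a b + g c b * dn a c + g a c * dn b c) / 2 + (l a * dnn b + l b * dnn a) / 2"
    and FFdef: "\<And>a b. FF a b = (dl a b - dl b a) / 2"
    and ss: "\<And>a. ss a = (\<Sum>b\<in>UNIV. nn b * FF b a)"
  shows "(\<Sum>b\<in>UNIV. UU a b * nn b) = - mm * ss a + mm\<^sup>2 * dll a / 2 + dnn a / 2"
proof -
  define TA where "TA = (\<Sum>b\<in>UNIV. \<Sum>c\<in>UNIV. nn b * nn c * dg c a b)"
  define TB where "TB = (\<Sum>b\<in>UNIV. \<Sum>c\<in>UNIV. nn b * g c b * dn a c)"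
  define TC where "TC = (\<Sum>b\<in>UNIV. \<Sum>c\<in>UNIV. nn b * g a c * dn b c)"
  define Q where "Q = (\<Sum>b\<in>UNIV. nn b * dnn b)"
  define LN where "LN = (\<Sum>b\<in>UNIV. l b * nn b)"
  have exp: "(\<Sum>b\<in>UNIV. UU a b * nn b) = (TA + TB + TC) / 2 + (l a * Q + dnn a * LN) / 2"
    unfolding UUdef TA_def TB_def TC_def Q_def LN_def
    by (simp add: sum.distrib sum_distrib_left sum_distrib_right add_divide_distrib sum_divide_distrib[symmetric] algebra_simps)
  have "TA = (\<Sum>c\<in>UNIV. nn c * (\<Sum>b\<in>UNIV. dg c a b * nn b))"
    unfolding TA_def by (subst sum.swap) (simp add: sum_distrib_left algebra_simps)
  also have "\<dots> = (\<Sum>c\<in>UNIV. nn c * (- (\<Sum>b\<in>UNIV. g a b * dn c b) - dnn c * l a - mm * dl c a))"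
  proof (rule sum.cong[OF refl])
    fix c
    have "(\<Sum>b\<in>UNIV. dg c a b * nn b) = - (\<Sum>b\<in>UNIV. g a b * dn c b) - dnn c * l a - mm * dl c a"
      using D1[of c a] by (simp add: sum.distrib)
    then show "nn c * (\<Sum>b\<in>UNIV. dg c a b * nn b) = nn c * (- (\<Sum>b\<in>UNIV. g a b * dn c b) - dnn c * l a - mm * dl c a)" by simp
  qed
  also have "\<dots> = - TC - l a * Q - mm * (\<Sum>c\<in>UNIV. nn c * dl c a)"
    unfolding TC_def Q_def
    by (simp add: sum.distrib sum_subtractf sum_negf sum_distrib_left sum_distrib_right algebra_simps)
  finally have eA: "TA = - TC - l a * Q - mm * (\<Sum>c\<in>UNIV. nn c * dl c a)" .
  have "TB = (\<Sum>c\<in>UNIV. dn a c * (\<Sum>b\<in>UNIV. g c b * nn b))"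
    unfolding TB_def by (subst sum.swap) (simp add: sum_distrib_left algebra_simps)
  also have "\<dots> = (\<Sum>c\<in>UNIV. dn a c * (- mm * l c))"
  proof (rule sum.cong[OF refl])
    fix c
    have "(\<Sum>b\<in>UNIV. g c b * nn b) = - mm * l c" using H1[of c] by linarith
    then show "dn a c * (\<Sum>b\<in>UNIV. g c b * nn b) = dn a c * (- mm * l c)" by simp
  qed
  also have "\<dots> = - mm * (\<Sum>c\<in>UNIV. l c * dn a c)"
    by (simp add: sum_distrib_left algebra_simps)
  finally have eB: "TB = - mm * (\<Sum>c\<in>UNIV. l c * dn a c)" .
  have eD: "(\<Sum>c\<in>UNIV. l c * dn a c) = - (\<Sum>c\<in>UNIV. dl a c * nn c) - dnn a * ll - mm * dll a"
    using D2[of a] by (simp add: sum.distrib)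
  have eLN: "LN = 1 - mm * ll" using H2 unfolding LN_def by simp
  have ess: "ss a = ((\<Sum>c\<in>UNIV. nn c * dl c a) - (\<Sum>c\<in>UNIV. dl a c * nn c)) / 2"
    unfolding ss FFdef
    by (simp add: sum_subtractf sum_divide_distrib[symmetric] right_diff_distrib algebra_simps)
  show ?thesis unfolding exp eA eB eD eLN ess
    by (simp add: algebra_simps power2_eq_square add_divide_distrib diff_divide_distrib)
qed

lemma swap3:
  fixes f :: "'a::finite \<Rightarrow> real" and h :: "'a \<Rightarrow> 'b::finite \<Rightarrow> 'c::finite \<Rightarrow> real"
  shows "(\<Sum>a\<in>UNIV. f a * (\<Sum>b\<in>UNIV. \<Sum>c\<in>UNIV. h a b c)) = (\<Sum>b\<in>UNIV. \<Sum>c\<in>UNIV. \<Sum>a\<in>UNIV. f a * h a b c)"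
proof -
  have "(\<Sum>a\<in>UNIV. f a * (\<Sum>b\<in>UNIV. \<Sum>c\<in>UNIV. h a b c)) = (\<Sum>a\<in>UNIV. \<Sum>b\<in>UNIV. \<Sum>c\<in>UNIV. f a * h a b c)"
    by (simp add: sum_distrib_left)
  also have "\<dots> = (\<Sum>b\<in>UNIV. \<Sum>a\<in>UNIV. \<Sum>c\<in>UNIV. f a * h a b c)" by (rule sum.swap)
  also have "\<dots> = (\<Sum>b\<in>UNIV. \<Sum>c\<in>UNIV. \<Sum>a\<in>UNIV. f a * h a b c)"
    by (rule sum.cong[OF refl], rule sum.swap)
  finally show ?thesis .
qed

lemma alg_main:
  fixes PP UU FF :: "'n::finite \<Rightarrow> 'n \<Rightarrow> real" and nn t :: "'n \<Rightarrow> real"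
  fixes G :: "'n \<Rightarrow> 'n \<Rightarrow> 'n \<Rightarrow> real" and dn dt :: "'n \<Rightarrow> 'n \<Rightarrow> real"
    and dnn dll ss dthn lie1v :: "'n \<Rightarrow> real" and mm thn lie0thn lie0ll :: real
  assumes NF: "\<And>a b. dn a b + (\<Sum>d\<in>UNIV. G b a d * nn d) = (\<Sum>d\<in>UNIV. PP b d * UU a d) - mm * (\<Sum>d\<in>UNIV. PP b d * FF a d) + nn b * ss a - mm * nn b * dll a"
    and UNF: "\<And>a. (\<Sum>b\<in>UNIV. UU a b * nn b) = - mm * ss a + mm\<^sup>2 * dll a / 2 + dnn a / 2"
    and UUsym: "\<And>a b. UU a b = UU b a"
    and FFa: "\<And>a b. FF a b = - FF b a"
    and ss: "\<And>a. ss a = (\<Sum>b\<in>UNIV. nn b * FF b a)"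
    and Gsym: "\<And>c a b. G c a b = G c b a"
    and thn: "thn = (\<Sum>b\<in>UNIV. t b * nn b)"
    and dthn: "\<And>a. dthn a = (\<Sum>b\<in>UNIV. dt a b * nn b + t b * dn a b)"
    and lie1v: "\<And>a. lie1v a = (\<Sum>b\<in>UNIV. nn b * dt b a + t b * dn a b)"
    and lie0thn: "lie0thn = (\<Sum>b\<in>UNIV. nn b * dthn b)"
    and lie0ll: "lie0ll = (\<Sum>b\<in>UNIV. nn b * dll b)"
  shows
   "(\<forall>a. (\<Sum>b\<in>UNIV. nn b * (dt a b - (\<Sum>c\<in>UNIV. G c a b * t c)))
       = dthn a - thn * ss a
         - (\<Sum>b\<in>UNIV. \<Sum>c\<in>UNIV. PP b c * UU a c * t b)
         + mm * (thn * dll a + (\<Sum>b\<in>UNIV. \<Sum>c\<in>UNIV. PP b c * FF a c * t b))) \<and>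
   (\<forall>a. (\<Sum>b\<in>UNIV. nn b * (dt b a - (\<Sum>c\<in>UNIV. G c b a * t c)))
       = lie1v a - thn * ss a
         - (\<Sum>b\<in>UNIV. \<Sum>c\<in>UNIV. PP b c * UU a c * t b)
         + mm * (thn * dll a + (\<Sum>b\<in>UNIV. \<Sum>c\<in>UNIV. PP b c * FF a c * t b))) \<and>
   (\<forall>a. 2 * (\<Sum>b\<in>UNIV. nn b * (((dt a b - (\<Sum>c\<in>UNIV. G c a b * t c)) + (dt b a - (\<Sum>c\<in>UNIV. G c b a * t c))) / 2))
       = lie1v a + dthn a
         - 2 * (thn * ss a + (\<Sum>b\<in>UNIV. \<Sum>c\<in>UNIV. PP b c * UU a c * t b))
         + 2 * mm * (thn * dll a + (\<Sum>b\<in>UNIV. \<Sum>c\<in>UNIV. PP b c * FF a c * t b))) \<and>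
   (\<Sum>a\<in>UNIV. \<Sum>b\<in>UNIV. nn a * nn b * (dt a b - (\<Sum>c\<in>UNIV. G c a b * t c)))
       = lie0thn + mm * thn * lie0ll
         + (\<Sum>b\<in>UNIV. \<Sum>c\<in>UNIV. PP b c * t b *
              (2 * mm * ss c - mm\<^sup>2 * dll c / 2 - dnn c / 2))"
proof -
  define K where "K a = (\<Sum>b\<in>UNIV. \<Sum>c\<in>UNIV. PP b c * UU a c * t b) - mm * (\<Sum>b\<in>UNIV. \<Sum>c\<in>UNIV. PP b c * FF a c * t b)
      + thn * ss a - mm * thn * dll a" for a
  have KK: "(\<Sum>b\<in>UNIV. t b * dn a b) + (\<Sum>b\<in>UNIV. t b * (\<Sum>d\<in>UNIV. G b a d * nn d)) = K a" for a
  proof -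
    have "(\<Sum>b\<in>UNIV. t b * dn a b) + (\<Sum>b\<in>UNIV. t b * (\<Sum>d\<in>UNIV. G b a d * nn d))
        = (\<Sum>b\<in>UNIV. t b * (dn a b + (\<Sum>d\<in>UNIV. G b a d * nn d)))"
      by (simp add: sum.distrib distrib_left)
    also have "\<dots> = (\<Sum>b\<in>UNIV. t b * ((\<Sum>d\<in>UNIV. PP b d * UU a d) - mm * (\<Sum>d\<in>UNIV. PP b d * FF a d) + nn b * ss a - mm * nn b * dll a))"
      by (simp only: NF)
    also have "\<dots> = K a" unfolding K_def thn
      by (simp add: sum.distrib sum_subtractf sum_distrib_left sum_distrib_right algebra_simps)
    finally show ?thesis .
  qed
  have sw: "(\<Sum>b\<in>UNIV. nn b * (\<Sum>c\<in>UNIV. G c a b * t c)) = (\<Sum>b\<in>UNIV. t b * (\<Sum>d\<in>UNIV. G b a d * nn d))" for a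
    by (simp add: sum_distrib_left algebra_simps) (rule sum.swap)
  have R1: "(\<Sum>b\<in>UNIV. nn b * (dt a b - (\<Sum>c\<in>UNIV. G c a b * t c))) = dthn a - K a" for a
  proof -
    have "(\<Sum>b\<in>UNIV. nn b * (dt a b - (\<Sum>c\<in>UNIV. G c a b * t c))) = (\<Sum>b\<in>UNIV. nn b * dt a b) - (\<Sum>b\<in>UNIV. nn b * (\<Sum>c\<in>UNIV. G c a b * t c))"
      by (simp add: sum_subtractf right_diff_distrib)
    then show ?thesis using KK[of a] sw[of a] unfolding dthn
      by (simp add: sum.distrib algebra_simps)
  qed
  have R2: "(\<Sum>b\<in>UNIV. nn b * (dt b a - (\<Sum>c\<in>UNIV. G c b a * t c))) = lie1v a - K a" for a
  proof -
    have "(\<Sum>b\<in>UNIV. nn b * (dt b a - (\<Sum>c\<in>UNIV. G c b a * t c))) = (\<Sum>b\<in>UNIV. nn b * dt b a) - (\<Sum>b\<in>UNIV. nn b * (\<Sum>c\<in>UNIV. G c a b * t c))"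
      by (simp add: sum_subtractf right_diff_distrib Gsym[of _ _ a])
    then show ?thesis using KK[of a] sw[of a] unfolding lie1v
      by (simp add: sum.distrib algebra_simps)
  qed
  have P1: "\<forall>a. (\<Sum>b\<in>UNIV. nn b * (dt a b - (\<Sum>c\<in>UNIV. G c a b * t c)))
       = dthn a - thn * ss a
         - (\<Sum>b\<in>UNIV. \<Sum>c\<in>UNIV. PP b c * UU a c * t b)
         + mm * (thn * dll a + (\<Sum>b\<in>UNIV. \<Sum>c\<in>UNIV. PP b c * FF a c * t b))"
    using R1 unfolding K_def by (simp add: algebra_simps)
  have P2: "\<forall>a. (\<Sum>b\<in>UNIV. nn b * (dt b a - (\<Sum>c\<in>UNIV. G c b a * t c)))
       = lie1v a - thn * ss a
         - (\<Sum>b\<in>UNIV. \<Sum>c\<in>UNIV. PP b c * UU a c * t b)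
         + mm * (thn * dll a + (\<Sum>b\<in>UNIV. \<Sum>c\<in>UNIV. PP b c * FF a c * t b))"
    using R2 unfolding K_def by (simp add: algebra_simps)
  have P3: "\<forall>a. 2 * (\<Sum>b\<in>UNIV. nn b * (((dt a b - (\<Sum>c\<in>UNIV. G c a b * t c)) + (dt b a - (\<Sum>c\<in>UNIV. G c b a * t c))) / 2))
       = lie1v a + dthn a
         - 2 * (thn * ss a + (\<Sum>b\<in>UNIV. \<Sum>c\<in>UNIV. PP b c * UU a c * t b))
         + 2 * mm * (thn * dll a + (\<Sum>b\<in>UNIV. \<Sum>c\<in>UNIV. PP b c * FF a c * t b))"
  proof
    fix a
    have "2 * (\<Sum>b\<in>UNIV. nn b * (((dt a b - (\<Sum>c\<in>UNIV. G c a b * t c)) + (dt b a - (\<Sum>c\<in>UNIV. G c b a * t c))) / 2))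
      = (\<Sum>b\<in>UNIV. nn b * (dt a b - (\<Sum>c\<in>UNIV. G c a b * t c))) + (\<Sum>b\<in>UNIV. nn b * (dt b a - (\<Sum>c\<in>UNIV. G c b a * t c)))"
      by (simp add: sum_divide_distrib[symmetric] distrib_left sum.distrib)
    then show "2 * (\<Sum>b\<in>UNIV. nn b * (((dt a b - (\<Sum>c\<in>UNIV. G c a b * t c)) + (dt b a - (\<Sum>c\<in>UNIV. G c b a * t c))) / 2))
       = lie1v a + dthn a
         - 2 * (thn * ss a + (\<Sum>b\<in>UNIV. \<Sum>c\<in>UNIV. PP b c * UU a c * t b))
         + 2 * mm * (thn * dll a + (\<Sum>b\<in>UNIV. \<Sum>c\<in>UNIV. PP b c * FF a c * t b))"
      using R1[of a] R2[of a] unfolding K_def by (simp add: algebra_simps)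
  qed
  have P4: "(\<Sum>a\<in>UNIV. \<Sum>b\<in>UNIV. nn a * nn b * (dt a b - (\<Sum>c\<in>UNIV. G c a b * t c)))
       = lie0thn + mm * thn * lie0ll
         + (\<Sum>b\<in>UNIV. \<Sum>c\<in>UNIV. PP b c * t b *
              (2 * mm * ss c - mm\<^sup>2 * dll c / 2 - dnn c / 2))"
  proof -
    define SU where "SU a = (\<Sum>b\<in>UNIV. \<Sum>c\<in>UNIV. PP b c * UU a c * t b)" for a
    define SF where "SF a = (\<Sum>b\<in>UNIV. \<Sum>c\<in>UNIV. PP b c * FF a c * t b)" for a
    define cv where "cv a = (\<Sum>b\<in>UNIV. nn b * (dt a b - (\<Sum>c\<in>UNIV. G c a b * t c)))" for a
    have c1: "cv a = dthn a - thn * ss a - SU a + mm * (thn * dll a + SF a)" for a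
      using P1 unfolding cv_def SU_def SF_def by blast
    have s0: "(\<Sum>a\<in>UNIV. nn a * ss a) = 0"
    proof -
      have A: "(\<Sum>a\<in>UNIV. nn a * ss a) = (\<Sum>a\<in>UNIV. \<Sum>b\<in>UNIV. nn a * nn b * FF b a)"
        unfolding ss by (simp add: sum_distrib_left mult.assoc)
      have "(\<Sum>a\<in>UNIV. \<Sum>b\<in>UNIV. nn a * nn b * FF b a) = (\<Sum>b\<in>UNIV. \<Sum>a\<in>UNIV. nn a * nn b * FF b a)" by (rule sum.swap)
      also have "\<dots> = (\<Sum>b\<in>UNIV. \<Sum>a\<in>UNIV. - (nn b * nn a * FF a b))"
        by (intro sum.cong refl) (subst FFa, simp)
      also have "\<dots> = - (\<Sum>a\<in>UNIV. \<Sum>b\<in>UNIV. nn a * nn b * FF b a)"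
        by (simp add: sum_negf)
      finally have "(\<Sum>a\<in>UNIV. \<Sum>b\<in>UNIV. nn a * nn b * FF b a) = 0" by simp
      then show ?thesis using A by simp
    qed
    have sU: "(\<Sum>a\<in>UNIV. nn a * SU a)
        = (\<Sum>b\<in>UNIV. \<Sum>c\<in>UNIV. PP b c * t b * (- mm * ss c + mm\<^sup>2 * dll c / 2 + dnn c / 2))"
    proof -
      have "(\<Sum>a\<in>UNIV. nn a * SU a)
          = (\<Sum>b\<in>UNIV. \<Sum>c\<in>UNIV. \<Sum>a\<in>UNIV. nn a * (PP b c * UU a c * t b))" unfolding SU_def by (rule swap3)
      also have "\<dots> = (\<Sum>b\<in>UNIV. \<Sum>c\<in>UNIV. PP b c * t b * (\<Sum>a\<in>UNIV. UU c a * nn a))"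
        by (simp add: sum_distrib_left UUsym[of _ "_::'n"] mult_ac)
      finally show ?thesis by (simp only: UNF)
    qed
    have sF: "(\<Sum>a\<in>UNIV. nn a * SF a) = (\<Sum>b\<in>UNIV. \<Sum>c\<in>UNIV. PP b c * t b * ss c)"
    proof -
      have "(\<Sum>a\<in>UNIV. nn a * SF a)
          = (\<Sum>b\<in>UNIV. \<Sum>c\<in>UNIV. \<Sum>a\<in>UNIV. nn a * (PP b c * FF a c * t b))" unfolding SF_def by (rule swap3)
      also have "\<dots> = (\<Sum>b\<in>UNIV. \<Sum>c\<in>UNIV. PP b c * t b * ss c)"
        by (simp add: ss sum_distrib_left mult_ac)
      finally show ?thesis .
    qed
    have fin: "mm * (\<Sum>b\<in>UNIV. \<Sum>c\<in>UNIV. PP b c * t b * ss c)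
        - (\<Sum>b\<in>UNIV. \<Sum>c\<in>UNIV. PP b c * t b * (- mm * ss c + mm\<^sup>2 * dll c / 2 + dnn c / 2))
        = (\<Sum>b\<in>UNIV. \<Sum>c\<in>UNIV. PP b c * t b * (2 * mm * ss c - mm\<^sup>2 * dll c / 2 - dnn c / 2))"
    proof -
      have "mm * (\<Sum>b\<in>UNIV. \<Sum>c\<in>UNIV. PP b c * t b * ss c)
        - (\<Sum>b\<in>UNIV. \<Sum>c\<in>UNIV. PP b c * t b * (- mm * ss c + mm\<^sup>2 * dll c / 2 + dnn c / 2))
        = (\<Sum>b\<in>UNIV. \<Sum>c\<in>UNIV. mm * (PP b c * t b * ss c) - PP b c * t b * (- mm * ss c + mm\<^sup>2 * dll c / 2 + dnn c / 2))"
        by (simp only: sum_subtractf sum_distrib_left)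
      also have "\<dots> = (\<Sum>b\<in>UNIV. \<Sum>c\<in>UNIV. PP b c * t b * (2 * mm * ss c - mm\<^sup>2 * dll c / 2 - dnn c / 2))"
        by (intro sum.cong refl) (simp add: algebra_simps)
      finally show ?thesis .
    qed
    have "(\<Sum>a\<in>UNIV. \<Sum>b\<in>UNIV. nn a * nn b * (dt a b - (\<Sum>c\<in>UNIV. G c a b * t c)))
        = (\<Sum>a\<in>UNIV. nn a * cv a)"
      unfolding cv_def by (simp add: sum_distrib_left mult.assoc)
    also have "\<dots> = (\<Sum>a\<in>UNIV. nn a * dthn a - thn * (nn a * ss a) - nn a * SU a
         + mm * thn * (nn a * dll a) + mm * (nn a * SF a))"
      by (intro sum.cong refl) (simp add: c1 algebra_simps)
    also have "\<dots> = lie0thn - thn * (\<Sum>a\<in>UNIV. nn a * ss a) - (\<Sum>a\<in>UNIV. nn a * SU a)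
         + mm * thn * lie0ll + mm * (\<Sum>a\<in>UNIV. nn a * SF a)"
      unfolding lie0thn lie0ll
      by (simp only: sum.distrib sum_subtractf sum_distrib_left)
    also have "\<dots> = lie0thn + mm * thn * lie0ll + (mm * (\<Sum>a\<in>UNIV. nn a * SF a) - (\<Sum>a\<in>UNIV. nn a * SU a))"
      unfolding s0 by simp
    also have "\<dots> = lie0thn + mm * thn * lie0ll
         + (\<Sum>b\<in>UNIV. \<Sum>c\<in>UNIV. PP b c * t b * (2 * mm * ss c - mm\<^sup>2 * dll c / 2 - dnn c / 2))"
      unfolding sU sF fin ..
    finally show ?thesis .
  qed
  show ?thesis using P1 P2 P3 P4 by blast
qed



theorem lemmaC1:
  fixes U :: "(real^'n::finite) set"
    and gam P :: "real^'n \<Rightarrow> 'n \<Rightarrow> 'n \<Rightarrow> real"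
    and ell n th :: "real^'n \<Rightarrow> 'n \<Rightarrow> real"
    and ell2 n2 :: "real^'n \<Rightarrow> real"
    and Gam :: "real^'n \<Rightarrow> 'n \<Rightarrow> 'n \<Rightarrow> 'n \<Rightarrow> real"
  assumes "metric_hypersurface_data U gam ell ell2"
    and "hsd_inverse U gam ell ell2 P n n2"
    and "ring_connection U gam ell ell2 n n2 Gam"
    and "smooth_1 U th"
    and "x \<in> U"
  shows
   "(\<forall>a. (\<Sum>b\<in>UNIV. n x b * cov1 Gam th x a b)
       = pd a (thn th n) x - thn th n x * sform ell n x a
         - (\<Sum>b\<in>UNIV. \<Sum>c\<in>UNIV. P x b c * Uten gam ell n n2 x a c * th x b)
         + n2 x * (thn th n x * pd a ell2 x + (\<Sum>b\<in>UNIV. \<Sum>c\<in>UNIV. P x b c * Ften ell x a c * th x b))) \<and>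
   (\<forall>a. (\<Sum>b\<in>UNIV. n x b * cov1 Gam th x b a)
       = lie1 n th x a - thn th n x * sform ell n x a
         - (\<Sum>b\<in>UNIV. \<Sum>c\<in>UNIV. P x b c * Uten gam ell n n2 x a c * th x b)
         + n2 x * (thn th n x * pd a ell2 x + (\<Sum>b\<in>UNIV. \<Sum>c\<in>UNIV. P x b c * Ften ell x a c * th x b))) \<and>
   (\<forall>a. 2 * (\<Sum>b\<in>UNIV. n x b * ((cov1 Gam th x a b + cov1 Gam th x b a) / 2))
       = lie1 n th x a + pd a (thn th n) x
         - 2 * (thn th n x * sform ell n x a + (\<Sum>b\<in>UNIV. \<Sum>c\<in>UNIV. P x b c * Uten gam ell n n2 x a c * th x b))
         + 2 * n2 x * (thn th n x * pd a ell2 x + (\<Sum>b\<in>UNIV. \<Sum>c\<in>UNIV. P x b c * Ften ell x a c * th x b))) \<and>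
   (\<Sum>a\<in>UNIV. \<Sum>b\<in>UNIV. n x a * n x b * cov1 Gam th x a b)
       = lie0 n (thn th n) x + n2 x * thn th n x * lie0 n ell2 x
         + (\<Sum>b\<in>UNIV. \<Sum>c\<in>UNIV. P x b c * th x b *
              (2 * n2 x * sform ell n x c - (n2 x)\<^sup>2 * pd c ell2 x / 2 - pd c n2 x / 2))"
proof -
  note mhd = assms(1)[unfolded metric_hypersurface_data_def]
  note inv = assms(2)[unfolded hsd_inverse_def]
  note rc = assms(3)[unfolded ring_connection_def]
  have oU: "open U" using mhd by blast
  have xU: "x \<in> U" by (rule assms(5))
  have sg: "\<And>a b. smooth_fun U (\<lambda>y. gam y a b)" using mhd unfolding smooth_2_def by blast
  have sl: "\<And>a. smooth_fun U (\<lambda>y. ell y a)" using mhd unfolding smooth_1_def by blast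
  have sl2: "smooth_fun U ell2" using mhd by blast
  have sn: "\<And>a. smooth_fun U (\<lambda>y. n y a)" using inv unfolding smooth_1_def by blast
  have sn2: "smooth_fun U n2" using inv by blast
  have sth: "\<And>a. smooth_fun U (\<lambda>y. th y a)" using assms(4) unfolding smooth_1_def by blast
  have gsym: "\<And>a b. gam x a b = gam x b a" using mhd xU by blast
  have H1: "\<And>a. (\<Sum>b\<in>UNIV. gam x a b * n x b) + n2 x * ell x a = 0" using inv xU by blast
  have H2: "(\<Sum>a\<in>UNIV. ell x a * n x a) + n2 x * ell2 x = 1" using inv xU by blast
  have H3: "\<And>a. (\<Sum>b\<in>UNIV. P x a b * ell x b) + ell2 x * n x a = 0" using inv xU by blast
  have H4: "\<And>a b. (\<Sum>c\<in>UNIV. P x a c * gam x c b) + ell x b * n x a = (if a = b then 1 else 0)"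
    using inv xU by blast
  have Gsym: "\<And>c a b. Gam x c a b = Gam x c b a" using rc xU by blast
  have C1: "\<And>a b c. pd a (\<lambda>y. gam y b c) x - (\<Sum>d\<in>UNIV. Gam x d a b * gam x d c) - (\<Sum>d\<in>UNIV. Gam x d a c * gam x b d)
      = - ell x c * Uten gam ell n n2 x a b - ell x b * Uten gam ell n n2 x a c"
    using rc xU unfolding cov2_def by blast
  have C2: "\<And>a b. pd a (\<lambda>y. ell y b) x - (\<Sum>c\<in>UNIV. Gam x c a b * ell x c) = Ften ell x a b - ell2 x * Uten gam ell n n2 x a b"
    using rc xU unfolding cov1_def by blast
  have D1: "\<And>c a. (\<Sum>b\<in>UNIV. pd c (\<lambda>y. gam y a b) x * n x b + gam x a b * pd c (\<lambda>y. n y b) x)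
      + pd c n2 x * ell x a + n2 x * pd c (\<lambda>y. ell y a) x = 0"
  proof -
    fix c a
    have "((\<lambda>t. (\<Sum>b\<in>UNIV. gam (x + t *\<^sub>R axis c 1) a b * n (x + t *\<^sub>R axis c 1) b)
          + n2 (x + t *\<^sub>R axis c 1) * ell (x + t *\<^sub>R axis c 1) a) has_real_derivative
        (\<Sum>b\<in>UNIV. pd c (\<lambda>y. gam y a b) x * n x b + gam x a b * pd c (\<lambda>y. n y b) x)
          + (pd c n2 x * ell x a + n2 x * pd c (\<lambda>y. ell y a) x)) (at 0)"
      by (intro DERIV_add DERIV_sum line_prod[where U=U, OF _ _ xU] sg sn sl sn2)
    from pd_local_zero[OF oU xU _ this] show "(\<Sum>b\<in>UNIV. pd c (\<lambda>y. gam y a b) x * n x b + gam x a b * pd c (\<lambda>y. n y b) x)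
      + pd c n2 x * ell x a + n2 x * pd c (\<lambda>y. ell y a) x = 0"
      using inv by (simp add: add.assoc)
  qed
  have D2: "\<And>c. (\<Sum>a\<in>UNIV. pd c (\<lambda>y. ell y a) x * n x a + ell x a * pd c (\<lambda>y. n y a) x)
      + pd c n2 x * ell2 x + n2 x * pd c ell2 x = 0"
  proof -
    fix c
    have "((\<lambda>t. (\<Sum>a\<in>UNIV. ell (x + t *\<^sub>R axis c 1) a * n (x + t *\<^sub>R axis c 1) a)
          + n2 (x + t *\<^sub>R axis c 1) * ell2 (x + t *\<^sub>R axis c 1) - 1) has_real_derivative
        (\<Sum>a\<in>UNIV. pd c (\<lambda>y. ell y a) x * n x a + ell x a * pd c (\<lambda>y. n y a) x)
          + (pd c n2 x * ell2 x + n2 x * pd c ell2 x) - 0) (at 0)"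
      by (intro DERIV_diff DERIV_const DERIV_add DERIV_sum line_prod[where U=U, OF _ _ xU] sl sn sl2 sn2)
    from pd_local_zero[OF oU xU _ this] show "(\<Sum>a\<in>UNIV. pd c (\<lambda>y. ell y a) x * n x a + ell x a * pd c (\<lambda>y. n y a) x)
      + pd c n2 x * ell2 x + n2 x * pd c ell2 x = 0"
      using inv by (simp add: add.assoc)
  qed
  have dgsym: "\<And>c a b. pd c (\<lambda>y. gam y a b) x = pd c (\<lambda>y. gam y b a) x"
  proof -
    fix c a b
    have "((\<lambda>t. gam (x + t *\<^sub>R axis c 1) a b - gam (x + t *\<^sub>R axis c 1) b a) has_real_derivative
        pd c (\<lambda>y. gam y a b) x - pd c (\<lambda>y. gam y b a) x) (at 0)"
      by (intro DERIV_diff pd_has[OF _ xU] sg)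
    from pd_local_zero[OF oU xU _ this] show "pd c (\<lambda>y. gam y a b) x = pd c (\<lambda>y. gam y b a) x"
      using mhd by simp
  qed
  have dthn: "\<And>a. pd a (thn th n) x = (\<Sum>b\<in>UNIV. pd a (\<lambda>y. th y b) x * n x b + th x b * pd a (\<lambda>y. n y b) x)"
  proof -
    fix a
    have "((\<lambda>t. (\<Sum>b\<in>UNIV. th (x + t *\<^sub>R axis a 1) b * n (x + t *\<^sub>R axis a 1) b)) has_real_derivative
        (\<Sum>b\<in>UNIV. pd a (\<lambda>y. th y b) x * n x b + th x b * pd a (\<lambda>y. n y b) x)) (at 0)"
      by (intro DERIV_sum line_prod[where U=U, OF _ _ xU] sth sn)
    then show "pd a (thn th n) x = (\<Sum>b\<in>UNIV. pd a (\<lambda>y. th y b) x * n x b + th x b * pd a (\<lambda>y. n y b) x)"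
      unfolding thn_def by (rule pd_eqI)
  qed
  have UUdef: "\<And>a b. Uten gam ell n n2 x a b = (\<Sum>c\<in>UNIV. n x c * pd c (\<lambda>y. gam y a b) x + gam x c b * pd a (\<lambda>y. n y c) x + gam x a c * pd b (\<lambda>y. n y c) x) / 2
      + (ell x a * pd b n2 x + ell x b * pd a n2 x) / 2"
    unfolding Uten_def lie_gam_def by simp
  have UUsym: "\<And>a b. Uten gam ell n n2 x a b = Uten gam ell n n2 x b a"
  proof -
    fix a b
    have "(\<Sum>c\<in>UNIV. n x c * pd c (\<lambda>y. gam y a b) x + gam x c b * pd a (\<lambda>y. n y c) x + gam x a c * pd b (\<lambda>y. n y c) x)
       = (\<Sum>c\<in>UNIV. n x c * pd c (\<lambda>y. gam y b a) x + gam x c a * pd b (\<lambda>y. n y c) x + gam x b c * pd a (\<lambda>y. n y c) x)"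
    proof (rule sum.cong[OF refl])
      fix c
      show "n x c * pd c (\<lambda>y. gam y a b) x + gam x c b * pd a (\<lambda>y. n y c) x + gam x a c * pd b (\<lambda>y. n y c) x
        = n x c * pd c (\<lambda>y. gam y b a) x + gam x c a * pd b (\<lambda>y. n y c) x + gam x b c * pd a (\<lambda>y. n y c) x"
        using dgsym[of c a b] gsym[of c b] gsym[of a c] by simp
    qed
    then show "Uten gam ell n n2 x a b = Uten gam ell n n2 x b a" unfolding UUdef by simp
  qed
  have FFdef: "\<And>a b. Ften ell x a b = (pd a (\<lambda>y. ell y b) x - pd b (\<lambda>y. ell y a) x) / 2"
    unfolding Ften_def by simp
  have FFa: "\<And>a b. Ften ell x a b = - Ften ell x b a" unfolding FFdef by (simp add: field_simps)
  have ss: "\<And>a. sform ell n x a = (\<Sum>b\<in>UNIV. n x b * Ften ell x b a)" unfolding sform_def by simp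
  have NF: "\<And>a b. pd a (\<lambda>y. n y b) x + (\<Sum>d\<in>UNIV. Gam x b a d * n x d)
     = (\<Sum>d\<in>UNIV. P x b d * Uten gam ell n n2 x a d) - n2 x * (\<Sum>d\<in>UNIV. P x b d * Ften ell x a d)
       + n x b * sform ell n x a - n2 x * n x b * pd a ell2 x"
    by (rule alg_N[where g="gam x" and l="ell x" and nn="n x" and dn="\<lambda>c a. pd c (\<lambda>y. n y a) x"
          and dg="\<lambda>c a b. pd c (\<lambda>y. gam y a b) x" and dl="\<lambda>c a. pd c (\<lambda>y. ell y a) x"
          and dnn="\<lambda>c. pd c n2 x" and dll="\<lambda>c. pd c ell2 x" and mm="n2 x" and ll="ell2 x",
          OF H1 H2 H3 H4 D1 D2 C1 C2 FFa ss])
  have UNF: "\<And>a. (\<Sum>b\<in>UNIV. Uten gam ell n n2 x a b * n x b) = - n2 x * sform ell n x a + (n2 x)\<^sup>2 * pd a ell2 x / 2 + pd a n2 x / 2"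
    by (rule alg_Un[where g="gam x" and l="ell x" and nn="n x" and dn="\<lambda>c a. pd c (\<lambda>y. n y a) x"
          and dg="\<lambda>c a b. pd c (\<lambda>y. gam y a b) x" and dl="\<lambda>c a. pd c (\<lambda>y. ell y a) x"
          and dnn="\<lambda>c. pd c n2 x" and dll="\<lambda>c. pd c ell2 x" and mm="n2 x" and ll="ell2 x",
          OF H1 H2 D1 D2 UUdef FFdef ss])
  have main: ?thesis
    unfolding cov1_def
    by (rule alg_main[where nn="n x" and t="th x" and G="Gam x" and dn="\<lambda>c a. pd c (\<lambda>y. n y a) x"
          and dt="\<lambda>c a. pd c (\<lambda>y. th y a) x" and dnn="\<lambda>c. pd c n2 x" and dll="\<lambda>c. pd c ell2 x"
          and dthn="\<lambda>a. pd a (thn th n) x" and lie1v="lie1 n th x" and thn="thn th n x"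
          and lie0thn="lie0 n (thn th n) x" and lie0ll="lie0 n ell2 x",
          OF NF UNF UUsym FFa ss Gsym])
      (simp_all add: thn_def dthn lie1_def lie0_def)
  show ?thesis by (rule main)
qed

end
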